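(* $\widehat{C}_{2,0} = \widehat{C}_{2,1} = 1$. Equivalently (for $m=1$, which implies the case $m=0$): for every $k \in \mathbb{N}$ and every function $F \colon \mathcal{K}_k^2 \to \mathbb{Z}$ with $|F(K_1) - F(K_2)| \le 1$ whenever $K_1, K_2 \in \mathcal{K}_k^2$ share a common edge ($\dim(K_1 \cap K_2) \ge 1$), there exist $p \in \mathbb{Z}$ and $\mathcal{S} \subset F^{-1}[\{p\}]$ such that $\bigcup \mathcal{S}$ connects some opposite faces of $I^2$.
   Context: $\mathcal{K}_k^n = \{\prod_{s=1}^n [\frac{i_s-1}{k}, \frac{i_s}{k}] : i_s \in \{1,\dots,k\}\}$ (cubes dividing $I^n=[0,1]^n$); $\dim$ is topological dimension; a set $S\subset I^n$ connects some opposite faces of $I^n$ if it is connected and meets both $\{z_i=0\}$ and $\{z_i=1\}$ for some $i$; $\mathbb{Z}^{n-1}$ has the $\ell^\infty$ norm; $P\subset\mathbb{Z}^{n-1}$ is $1$-connected if any two points are joined by a finite chain in $P$ with consecutive $\ell^\infty$-distances $\le 1$. $\widehat{C}_{n,m}$ is the least constant $C>0$ such that: for every $k\in\mathbb{N}$ and every $F\colon\mathcal{K}_k^n\to\mathbb{Z}^{n-1}$ with $\|F(K_1)-F(K_2)\|_\infty\le 1$ whenever $\dim(K_1\cap K_2)\ge m$, there exist a $1$-connected $P\subset\mathbb{Z}^{n-1}$ with $|P|\le C$ and $\mathcal{S}\subset F^{-1}[P]$ with $\bigcup\mathcal{S}$ connecting some opposite faces of $I^n$. *)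

theory Defs
  imports "HOL-Analysis.Analysis"
begin

definition grid_cubes :: "nat \<Rightarrow> (real \<times> real) set set" where
  "grid_cubes k = {cbox (real (i - 1) / real k, real (j - 1) / real k) (real i / real k, real j / real k)
                    | i j. i \<in> {1..k} \<and> j \<in> {1..k}}"

definition connects_opposite_faces :: "(real \<times> real) set \<Rightarrow> bool" where
  "connects_opposite_faces S \<longleftrightarrow> connected S \<and>
     (((\<exists>z\<in>S. fst z = 0) \<and> (\<exists>z\<in>S. fst z = 1)) \<or> ((\<exists>z\<in>S. snd z = 0) \<and> (\<exists>z\<in>S. snd z = 1)))"

text \<open>1-connectedness of a subset of Z^1 = Z (l^infinity norm = absolute value).\<close>
definition one_connected :: "int set \<Rightarrow> bool" where
  "one_connected P \<longleftrightarrow> (\<forall>p\<in>P. \<forall>q\<in>P. \<exists>xs. xs \<noteq> [] \<and> hd xs = p \<and> last xs = q \<and> set xs \<subseteq> P \<and>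
       (\<forall>i. Suc i < length xs \<longrightarrow> \<bar>xs ! Suc i - xs ! i\<bar> \<le> 1))"

text \<open>Admissibility of F for the parameter m: neighbouring squares (intersection of
  dimension \<ge> m) get values differing by at most 1.  The intersection of two grid
  squares is convex (possibly empty), so its topological dimension equals its affine
  dimension (aff_dim {} = -1).\<close>
definition admissible2 :: "nat \<Rightarrow> nat \<Rightarrow> ((real \<times> real) set \<Rightarrow> int) \<Rightarrow> bool" where
  "admissible2 m k F \<longleftrightarrow> (\<forall>K1\<in>grid_cubes k. \<forall>K2\<in>grid_cubes k.
      aff_dim (K1 \<inter> K2) \<ge> int m \<longrightarrow> \<bar>F K1 - F K2\<bar> \<le> 1)"

definition good_const2 :: "nat \<Rightarrow> real \<Rightarrow> bool" where
  "good_const2 m C \<longleftrightarrow> (\<forall>k::nat. k \<ge> 1 \<longrightarrow> (\<forall>F. admissible2 m k F \<longrightarrow>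
      (\<exists>P::int set. finite P \<and> one_connected P \<and> real (card P) \<le> C \<and>
        (\<exists>\<S>. \<S> \<subseteq> grid_cubes k \<and> (\<forall>K\<in>\<S>. F K \<in> P) \<and> connects_opposite_faces (\<Union>\<S>)))))"

definition C_hat2 :: "nat \<Rightarrow> real" where
  "C_hat2 m = Inf {C. C > 0 \<and> good_const2 m C}"

end

theory Submission
  imports Defs
begin


definition cell :: "nat \<Rightarrow> nat \<Rightarrow> nat \<Rightarrow> (real \<times> real) set" where
  "cell k i j = cbox (real (i - 1) / real k, real (j - 1) / real k) (real i / real k, real j / real k)"

lemma grid_cubes_cell: "grid_cubes k = {cell k i j | i j. i \<in> {1..k} \<and> j \<in> {1..k}}"
  unfolding grid_cubes_def cell_def by simp

lemma mem_cell:
  assumes "1 \<le> i" "1 \<le> j"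
  shows "z \<in> cell k i j \<longleftrightarrow> (real i - 1) / real k \<le> fst z \<and> fst z \<le> real i / real k \<and>
     (real j - 1) / real k \<le> snd z \<and> snd z \<le> real j / real k"
  using assms by (cases z) (simp add: cell_def cbox_Pair_iff of_nat_diff)

lemma closed_cell: "closed (cell k i j)" unfolding cell_def by (rule closed_cbox)
lemma connected_cell: "connected (cell k i j)" unfolding cell_def by (rule convex_connected, rule convex_box)

lemma cell_sub:
  assumes "k \<ge> 1" "i \<in> {1..k}" "j \<in> {1..k}" "z \<in> cell k i j"
  shows "0 \<le> fst z \<and> fst z \<le> 1 \<and> 0 \<le> snd z \<and> snd z \<le> 1"
proof -
  have k: "real k > 0" using assms by simp
  from assms have "real i \<le> real k" "real j \<le> real k" "real i \<ge> 1" "real j \<ge> 1" by auto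
  moreover from assms(2-4) have "(real i - 1) / real k \<le> fst z \<and> fst z \<le> real i / real k \<and>
     (real j - 1) / real k \<le> snd z \<and> snd z \<le> real j / real k" using mem_cell by auto
  moreover have "0 \<le> (real i - 1) / real k" "0 \<le> (real j - 1) / real k" 
    "real i / real k \<le> 1" "real j / real k \<le> 1" using k calculation by auto
  ultimately show ?thesis by linarith
qed


lemma cell_cover:
  assumes "k \<ge> 1" "0 \<le> fst z" "fst z \<le> 1" "0 \<le> snd z" "snd z \<le> 1"
  shows "\<exists>i\<in>{1..k}. \<exists>j\<in>{1..k}. z \<in> cell k i j"
proof -
  have k: "real k > 0" using assms by simp
  have ex: "\<exists>i\<in>{1..k}. (real i - 1) / real k \<le> t \<and> t \<le> real i / real k" if "0 \<le> t" "t \<le> 1" for t :: real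
  proof -
    define i where "i = max 1 (nat \<lceil>t * real k\<rceil>)"
    have "t * real k \<le> real k" using that k by (simp add: mult_le_cancel_right1)
    then have "nat \<lceil>t * real k\<rceil> \<le> k" by linarith
    then have "i \<in> {1..k}" using assms unfolding i_def by auto
    moreover have "real i - 1 \<le> t * real k" unfolding i_def using that k by (auto simp: max_def)
    moreover have "t * real k \<le> real i"
    proof -
      have c: "t * real k \<le> of_int \<lceil>t * real k\<rceil>" by (rule le_of_int_ceiling)
      have "0 \<le> t * real k" using that k by simp
      then have "0 \<le> \<lceil>t * real k\<rceil>" by linarith
      then have "real (nat \<lceil>t * real k\<rceil>) = of_int \<lceil>t * real k\<rceil>" by simp
      moreover have "real (nat \<lceil>t * real k\<rceil>) \<le> real i" unfolding i_def by simp
      ultimately show ?thesis using c by linarith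
    qed
    ultimately show ?thesis using k by (auto simp: divide_le_eq le_divide_eq intro!: bexI[of _ i])
  qed
  from ex[of "fst z"] ex[of "snd z"] assms show ?thesis by (auto simp: mem_cell)
qed



lemma aff_dim_ge1: "p \<in> S \<Longrightarrow> q \<in> S \<Longrightarrow> p \<noteq> q \<Longrightarrow> aff_dim S \<ge> 1"
  using aff_dim_subset[of "{p,q}" S] aff_dim_2[of p q] by auto

lemma cell_in_grid: "i \<in> {1..k} \<Longrightarrow> j \<in> {1..k} \<Longrightarrow> cell k i j \<in> grid_cubes k"
  unfolding grid_cubes_cell by blast

lemma adj_vert:
  assumes "k \<ge> 1" "i \<ge> 1" "j \<ge> 1"
  shows "aff_dim (cell k i j \<inter> cell k i (j+1)) \<ge> 1"
proof -
  have k: "real k > 0" using assms by simp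
  let ?p = "((real i - 1) / real k, real j / real k)" and ?q = "(real i / real k, real j / real k)"
  have "?p \<noteq> ?q" using k by (auto simp: divide_right_mono)
  moreover have "?p \<in> cell k i j \<inter> cell k i (j+1)" "?q \<in> cell k i j \<inter> cell k i (j+1)"
    using assms k by (auto simp: mem_cell divide_right_mono)
  ultimately show ?thesis by (meson aff_dim_ge1)
qed

lemma adj_horiz:
  assumes "k \<ge> 1" "i \<ge> 1" "j \<ge> 1"
  shows "aff_dim (cell k i j \<inter> cell k (i+1) j) \<ge> 1"
proof -
  have k: "real k > 0" using assms by simp
  let ?p = "(real i / real k, (real j - 1) / real k)" and ?q = "(real i / real k, real j / real k)"
  have "?p \<noteq> ?q" using k by (auto simp: divide_right_mono)
  moreover have "?p \<in> cell k i j \<inter> cell k (i+1) j" "?q \<in> cell k i j \<inter> cell k (i+1) j"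
    using assms k by (auto simp: mem_cell divide_right_mono)
  ultimately show ?thesis by (meson aff_dim_ge1)
qed

lemma Fadj_vert:
  assumes "admissible2 1 k F" "k \<ge> 1" "i \<in> {1..k}" "j \<in> {1..k}" "j' \<in> {1..k}" "j' \<le> j + 1" "j \<le> j' + 1"
  shows "\<bar>F (cell k i j) - F (cell k i j')\<bar> \<le> 1"
proof -
  have g: "cell k i j \<in> grid_cubes k" "cell k i j' \<in> grid_cubes k" using assms cell_in_grid by auto
  consider "j' = j" | "j' = j + 1" | "j = j' + 1" using assms by linarith
  then show ?thesis
  proof cases
    case 2
    then show ?thesis using g assms adj_vert[of k i j] unfolding admissible2_def by auto
  next
    case 3
    then have "aff_dim (cell k i j \<inter> cell k i j') \<ge> 1" using assms adj_vert[of k i j'] by (simp add: Int_commute)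
    then show ?thesis using g assms unfolding admissible2_def by auto
  qed simp
qed

lemma Fadj_horiz:
  assumes "admissible2 1 k F" "k \<ge> 1" "j \<in> {1..k}" "i \<in> {1..k}" "i' \<in> {1..k}" "i' \<le> i + 1" "i \<le> i' + 1"
  shows "\<bar>F (cell k i j) - F (cell k i' j)\<bar> \<le> 1"
proof -
  have g: "cell k i j \<in> grid_cubes k" "cell k i' j \<in> grid_cubes k" using assms cell_in_grid by auto
  consider "i' = i" | "i' = i + 1" | "i = i' + 1" using assms by linarith
  then show ?thesis
  proof cases
    case 2
    then show ?thesis using g assms adj_horiz[of k i j] unfolding admissible2_def by auto
  next
    case 3
    then have "aff_dim (cell k i j \<inter> cell k i' j) \<ge> 1" using assms adj_horiz[of k i' j] by (simp add: Int_commute)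
    then show ?thesis using g assms unfolding admissible2_def by auto
  qed simp
qed

lemma index_close:
  assumes "k \<ge> 1" "(real i1 - 1) / real k \<le> x" "x \<le> real i2 / real k"
  shows "i1 \<le> i2 + 1"
proof -
  have k: "real k > 0" using assms by simp
  have "(real i1 - 1) / real k \<le> real i2 / real k" using assms by linarith
  then have "real i1 - 1 \<le> real i2" using k by (simp add: divide_right_mono_neg divide_le_cancel)
  then show ?thesis by linarith
qed

lemma grid_sep:
  assumes adm: "admissible2 1 k F" and k: "k \<ge> 1"
    and K1: "K1 \<in> grid_cubes k" and K2: "K2 \<in> grid_cubes k"
    and F1: "F K1 > p" and F2: "F K2 < p" and z: "z \<in> K1" "z \<in> K2"
  shows "\<exists>K3\<in>grid_cubes k. F K3 = p \<and> z \<in> K3"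
proof -
  obtain i1 j1 where 1: "K1 = cell k i1 j1" "i1 \<in> {1..k}" "j1 \<in> {1..k}" using K1 unfolding grid_cubes_cell by blast
  obtain i2 j2 where 2: "K2 = cell k i2 j2" "i2 \<in> {1..k}" "j2 \<in> {1..k}" using K2 unfolding grid_cubes_cell by blast
  have m1: "(real i1 - 1) / real k \<le> fst z \<and> fst z \<le> real i1 / real k \<and>
     (real j1 - 1) / real k \<le> snd z \<and> snd z \<le> real j1 / real k" using z 1 mem_cell by auto
  have m2: "(real i2 - 1) / real k \<le> fst z \<and> fst z \<le> real i2 / real k \<and>
     (real j2 - 1) / real k \<le> snd z \<and> snd z \<le> real j2 / real k" using z 2 mem_cell by auto
  have c: "i1 \<le> i2 + 1" "i2 \<le> i1 + 1" "j1 \<le> j2 + 1" "j2 \<le> j1 + 1"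
    using m1 m2 index_close[OF k] by meson+
  have a: "\<bar>F (cell k i1 j1) - F (cell k i1 j2)\<bar> \<le> 1"
    using Fadj_vert[OF adm k] 1 2 c by auto
  have b: "\<bar>F (cell k i1 j2) - F (cell k i2 j2)\<bar> \<le> 1"
    using Fadj_horiz[OF adm k, of j2 i2 i1] 1 2 c by (auto simp: abs_minus_commute)
  have "p < F (cell k i1 j1)" "F (cell k i2 j2) < p" using F1 F2 1 2 by auto
  then have "F (cell k i1 j2) = p" using a b by linarith
  moreover have "z \<in> cell k i1 j2" using m1 m2 1 2 mem_cell by auto
  ultimately show ?thesis using cell_in_grid 1 2 by blast
qed



definition psi :: "real \<times> real \<Rightarrow> real^2" where
  "psi z = (\<chi> i. if i = 1 then fst z else snd z)"

lemma psi_nth: "psi z $ 1 = fst z" "psi z $ 2 = snd z"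
  by (simp_all add: psi_def)

lemma psi_inj: "psi z = psi w \<Longrightarrow> z = w"
  by (metis psi_nth prod_eq_iff)

lemma continuous_psi: "continuous_on S psi"
  unfolding psi_def
proof (rule continuous_on_vec_lambda)
  fix i :: 2
  show "continuous_on S (\<lambda>x. if i = 1 then fst x else snd x)"
    by (cases "i = 1") (simp_all add: continuous_on_fst continuous_on_snd continuous_on_id)
qed

lemma fashoda_pair:
  fixes f g :: "real \<Rightarrow> real \<times> real"
  assumes f: "path f" and g: "path g"
    and fQ: "\<forall>z\<in>path_image f. 0 \<le> fst z \<and> fst z \<le> 1 \<and> 0 \<le> snd z \<and> snd z \<le> 1"
    and gQ: "\<forall>z\<in>path_image g. 0 \<le> fst z \<and> fst z \<le> 1 \<and> 0 \<le> snd z \<and> snd z \<le> 1"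
    and f0: "fst (pathstart f) = 0" and f1: "fst (pathfinish f) = 1"
    and g0: "snd (pathstart g) = 0" and g1: "snd (pathfinish g) = 1"
  shows "\<exists>z. z \<in> path_image f \<and> z \<in> path_image g"
proof -
  have pf: "path (psi \<circ> f)" "path (psi \<circ> g)"
    using f g continuous_psi path_continuous_image by blast+
  have box: "path_image (psi \<circ> h) \<subseteq> cbox (psi (0,0)) (psi (1,1))"
    if "\<forall>z\<in>path_image h. 0 \<le> fst z \<and> fst z \<le> 1 \<and> 0 \<le> snd z \<and> snd z \<le> 1" for h
    using that by (auto simp: path_image_compose mem_box_cart forall_2 psi_nth)
  obtain z where z: "z \<in> path_image (psi \<circ> f)" "z \<in> path_image (psi \<circ> g)"
  proof (rule fashoda[OF pf box[OF fQ] box[OF gQ]])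
    show "pathstart (psi \<circ> f) $ 1 = psi (0, 0) $ 1" "pathfinish (psi \<circ> f) $ 1 = psi (1, 1) $ 1"
      "pathstart (psi \<circ> g) $ 2 = psi (0, 0) $ 2" "pathfinish (psi \<circ> g) $ 2 = psi (1, 1) $ 2"
      using f0 f1 g0 g1 by (simp_all add: pathstart_compose pathfinish_compose psi_nth)
  qed blast
  then obtain u v where "u \<in> path_image f" "v \<in> path_image g" "z = psi u" "z = psi v"
    by (auto simp: path_image_compose)
  then show ?thesis using psi_inj by blast
qed



lemma seg_box: fixes p q u v :: "real \<times> real" shows "p \<in> cbox u v \<Longrightarrow> q \<in> cbox u v \<Longrightarrow> closed_segment p q \<subseteq> cbox u v"
  by (rule closed_segment_subset) (simp_all add: convex_box)

lemma cc_seg: fixes p q :: "real \<times> real" shows "closed_segment p q \<subseteq> S \<Longrightarrow> connected_component S p q"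
  unfolding connected_component_def by (rule exI[of _ "closed_segment p q"]) (simp add: convex_connected convex_closed_segment)

lemma cc_path3: fixes a b c d :: "real \<times> real"
  assumes "closed_segment a c \<subseteq> S" "closed_segment c d \<subseteq> S" "closed_segment d b \<subseteq> S"
  shows "connected_component S a b"
  by (meson assms cc_seg connected_component_trans)

lemma frontier_fst_ge: "frontier {z::real\<times>real. c \<le> fst z} \<subseteq> {z. fst z = c}"
proof
  fix z assume z: "z \<in> frontier {z::real\<times>real. c \<le> fst z}"
  have cl: "closed {z::real\<times>real. c \<le> fst z}" by (intro closed_Collect_le continuous_intros)
  have op: "open {z::real\<times>real. c < fst z}" by (intro open_Collect_less continuous_intros)
  have "{z::real\<times>real. c < fst z} \<subseteq> interior {z::real\<times>real. c \<le> fst z}"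
    by (rule interior_maximal) (auto simp: op)
  with z frontier_subset_closed[OF cl] show "z \<in> {z. fst z = c}"
    unfolding frontier_def by force
qed

lemma frontier_fst_le: "frontier {z::real\<times>real. fst z \<le> c} \<subseteq> {z. fst z = c}"
proof
  fix z assume z: "z \<in> frontier {z::real\<times>real. fst z \<le> c}"
  have cl: "closed {z::real\<times>real. fst z \<le> c}" by (intro closed_Collect_le continuous_intros)
  have op: "open {z::real\<times>real. fst z < c}" by (intro open_Collect_less continuous_intros)
  have "{z::real\<times>real. fst z < c} \<subseteq> interior {z::real\<times>real. fst z \<le> c}"
    by (rule interior_maximal) (auto simp: op)
  with z frontier_subset_closed[OF cl] show "z \<in> {z. fst z = c}"
    unfolding frontier_def by force
qed

lemma frontier_snd_ge: "frontier {z::real\<times>real. c \<le> snd z} \<subseteq> {z. snd z = c}"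
proof
  fix z assume z: "z \<in> frontier {z::real\<times>real. c \<le> snd z}"
  have cl: "closed {z::real\<times>real. c \<le> snd z}" by (intro closed_Collect_le continuous_intros)
  have op: "open {z::real\<times>real. c < snd z}" by (intro open_Collect_less continuous_intros)
  have "{z::real\<times>real. c < snd z} \<subseteq> interior {z::real\<times>real. c \<le> snd z}"
    by (rule interior_maximal) (auto simp: op)
  with z frontier_subset_closed[OF cl] show "z \<in> {z. snd z = c}"
    unfolding frontier_def by force
qed

lemma frontier_snd_le: "frontier {z::real\<times>real. snd z \<le> c} \<subseteq> {z. snd z = c}"
proof
  fix z assume z: "z \<in> frontier {z::real\<times>real. snd z \<le> c}"
  have cl: "closed {z::real\<times>real. snd z \<le> c}" by (intro closed_Collect_le continuous_intros)
  have op: "open {z::real\<times>real. snd z < c}" by (intro open_Collect_less continuous_intros)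
  have "{z::real\<times>real. snd z < c} \<subseteq> interior {z::real\<times>real. snd z \<le> c}"
    by (rule interior_maximal) (auto simp: op)
  with z frontier_subset_closed[OF cl] show "z \<in> {z. snd z = c}"
    unfolding frontier_def by force
qed



lemma H1_LR:
  fixes WW :: "(real \<times> real) set set"
  assumes fin: "finite WW" and cl: "\<And>K. K \<in> WW \<Longrightarrow> closed K" and cn: "\<And>K. K \<in> WW \<Longrightarrow> connected K"
    and inQ: "\<And>z. z \<in> \<Union>WW \<Longrightarrow> 0 \<le> fst z \<and> fst z \<le> 1 \<and> 0 \<le> snd z \<and> snd z \<le> 1"
    and nc: "\<And>z. z \<in> \<Union>WW \<Longrightarrow> \<not> ((\<exists>w\<in>connected_component_set (\<Union>WW) z. snd w = 0) \<and>
                                     (\<exists>w\<in>connected_component_set (\<Union>WW) z. snd w = 1))"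
  obtains g where "path g" "path_image g \<inter> \<Union>WW = {}"
    "\<forall>z\<in>path_image g. 0 \<le> fst z \<and> fst z \<le> 1 \<and> 0 < snd z \<and> snd z < 1"
    "fst (pathstart g) = 0" "fst (pathfinish g) = 1"
proof -
  define W where "W = \<Union>WW"
  define Hp where "Hp = {z::real\<times>real. 1 \<le> snd z}"
  define Hm where "Hm = {z::real\<times>real. snd z \<le> 0}"
  define Z where "Z = W \<union> Hp \<union> Hm"
  define a where "a = (-1::real, 1/2::real)"
  define b where "b = (2::real, 1/2::real)"
  have clW: "closed W" unfolding W_def using fin cl by (simp add: closed_Union)
  have clHp: "closed Hp" unfolding Hp_def by (intro closed_Collect_le continuous_intros)
  have clHm: "closed Hm" unfolding Hm_def by (intro closed_Collect_le continuous_intros)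
  have clZ: "closed Z" unfolding Z_def using clW clHp clHm by auto
  have inQ': "0 \<le> fst z \<and> fst z \<le> 1 \<and> 0 \<le> snd z \<and> snd z \<le> 1" if "z \<in> W" for z
    using inQ that unfolding W_def by blast
  have nc': "\<not> ((\<exists>w\<in>connected_component_set W z. snd w = 0) \<and> (\<exists>w\<in>connected_component_set W z. snd w = 1))"
    if "z \<in> W" for z using nc that unfolding W_def by blast
  have ccW: "connected_component_set W z = connected_component_set W w"
    if "K \<in> WW" "z \<in> K" "w \<in> K" for K z w
  proof -
    have "connected_component W z w"
      unfolding connected_component_def W_def using that cn by blast
    then show ?thesis using connected_component_eq[of w W z] by (simp add: mem_Collect_eq)
  qed
  have cc: "connected_component (- Z) a b"
  proof (rule ccontr)
    assume "\<not> connected_component (- Z) a b"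
    then obtain C where C: "C \<in> components Z" "\<not> connected_component (- C) a b"
      using separation_by_component_closed_pointwise[OF clZ] by blast
    have CZ: "C \<subseteq> Z" and cC: "connected C"
      using C in_components_subset in_components_connected by auto
    have up: "C \<inter> Hp \<noteq> {}"
    proof
      assume e: "C \<inter> Hp = {}"
      have sub: "cbox (-1,1/2) (-1,2) \<union> cbox (-1,2) (2,2) \<union> cbox (2,1/2) (2,2) \<subseteq> - C"
      proof
        fix z :: "real \<times> real"
        assume z: "z \<in> cbox (-1,1/2) (-1,2) \<union> cbox (-1,2) (2,2) \<union> cbox (2,1/2) (2,2)"
        have "z \<notin> W"
        proof
          assume "z \<in> W"
          from inQ'[OF this] z show False by (cases z) (auto simp: cbox_Pair_iff)
        qed
        moreover have "z \<notin> Hm" using z unfolding Hm_def by (cases z) (auto simp: cbox_Pair_iff)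
        ultimately show "z \<in> - C" using e CZ unfolding Z_def by blast
      qed
      have "connected_component (- C) a b"
      proof (rule cc_path3[of a "(-1,2)" _ "(2,2)"])
        have "closed_segment a (- 1, 2) \<subseteq> (cbox (-1,1/2) (-1,2) :: (real \<times> real) set)"
          by (rule seg_box) (auto simp: cbox_Pair_iff a_def b_def)
        then show "closed_segment a (- 1, 2) \<subseteq> - C" using sub by blast
        have "closed_segment (- 1, 2) (2, 2) \<subseteq> (cbox (-1,2) (2,2) :: (real \<times> real) set)"
          by (rule seg_box) (auto simp: cbox_Pair_iff a_def b_def)
        then show "closed_segment (- 1, 2) (2, 2) \<subseteq> - C" using sub by blast
        have "closed_segment (2, 2) b \<subseteq> (cbox (2,1/2) (2,2) :: (real \<times> real) set)"
          by (rule seg_box) (auto simp: cbox_Pair_iff a_def b_def)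
        then show "closed_segment (2, 2) b \<subseteq> - C" using sub by blast
      qed
      with C show False by blast
    qed
    have down: "C \<inter> Hm \<noteq> {}"
    proof
      assume e: "C \<inter> Hm = {}"
      have sub: "cbox (-1,-1) (-1,1/2) \<union> cbox (-1,-1) (2,-1) \<union> cbox (2,-1) (2,1/2) \<subseteq> - C"
      proof
        fix z :: "real \<times> real"
        assume z: "z \<in> cbox (-1,-1) (-1,1/2) \<union> cbox (-1,-1) (2,-1) \<union> cbox (2,-1) (2,1/2)"
        have "z \<notin> W"
        proof
          assume "z \<in> W"
          from inQ'[OF this] z show False by (cases z) (auto simp: cbox_Pair_iff)
        qed
        moreover have "z \<notin> Hp" using z unfolding Hp_def by (cases z) (auto simp: cbox_Pair_iff)
        ultimately show "z \<in> - C" using e CZ unfolding Z_def by blast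
      qed
      have "connected_component (- C) a b"
      proof (rule cc_path3[of a "(-1,-1)" _ "(2,-1)"])
        have "closed_segment a (- 1, -1) \<subseteq> (cbox (-1,-1) (-1,1/2) :: (real \<times> real) set)"
          by (rule seg_box) (auto simp: cbox_Pair_iff a_def b_def)
        then show "closed_segment a (- 1, -1) \<subseteq> - C" using sub by blast
        have "closed_segment (- 1, -1) (2, -1) \<subseteq> (cbox (-1,-1) (2,-1) :: (real \<times> real) set)"
          by (rule seg_box) (auto simp: cbox_Pair_iff a_def b_def)
        then show "closed_segment (- 1, -1) (2, -1) \<subseteq> - C" using sub by blast
        have "closed_segment (2, -1) b \<subseteq> (cbox (2,-1) (2,1/2) :: (real \<times> real) set)"
          by (rule seg_box) (auto simp: cbox_Pair_iff a_def b_def)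
        then show "closed_segment (2, -1) b \<subseteq> - C" using sub by blast
      qed
      with C show False by blast
    qed
    define P where "P K \<longleftrightarrow> (\<exists>z\<in>K. \<exists>w\<in>connected_component_set W z. snd w = 1)" for K
    define W1 where "W1 = \<Union>{K\<in>WW. P K}"
    define W2 where "W2 = \<Union>{K\<in>WW. \<not> P K}"
    have clW1: "closed W1" unfolding W1_def using fin cl by (intro closed_Union) auto
    have clW2: "closed W2" unfolding W2_def using fin cl by (intro closed_Union) auto
    have WU: "W = W1 \<union> W2" unfolding W_def W1_def W2_def by blast
    have Pz: "P K \<longleftrightarrow> (\<exists>w\<in>connected_component_set W z. snd w = 1)" if "K \<in> WW" "z \<in> K" for K z
      unfolding P_def
    proof
      assume "\<exists>z'\<in>K. \<exists>w\<in>connected_component_set W z'. snd w = 1"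
      then obtain z' w where zw: "z' \<in> K" "w \<in> connected_component_set W z'" "snd w = 1" by blast
      have "connected_component_set W z = connected_component_set W z'" by (rule ccW[OF that(1) that(2) zw(1)])
      with zw show "\<exists>w\<in>connected_component_set W z. snd w = 1" by blast
    next
      assume "\<exists>w\<in>connected_component_set W z. snd w = 1"
      then show "\<exists>z'\<in>K. \<exists>w\<in>connected_component_set W z'. snd w = 1" using that(2) by blast
    qed
    have zW: "z \<in> W" if "K \<in> WW" "z \<in> K" for K z using that unfolding W_def by blast
    have d1: "Hp \<inter> W2 = {}"
    proof -
      { fix z assume z: "z \<in> Hp" "z \<in> W2"
        then obtain K where K: "K \<in> WW" "\<not> P K" "z \<in> K" unfolding W2_def by blast
        have "snd z = 1" using z inQ'[OF zW[OF K(1,3)]] unfolding Hp_def by auto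
        moreover have "z \<in> connected_component_set W z" using zW[OF K(1,3)] by simp
        ultimately have False using Pz[OF K(1,3)] K by blast }
      then show ?thesis by blast
    qed
    have d2: "Hm \<inter> W1 = {}"
    proof -
      { fix z assume z: "z \<in> Hm" "z \<in> W1"
        then obtain K where K: "K \<in> WW" "P K" "z \<in> K" unfolding W1_def by blast
        have "snd z = 0" using z inQ'[OF zW[OF K(1,3)]] unfolding Hm_def by auto
        moreover have "z \<in> connected_component_set W z" using zW[OF K(1,3)] by simp
        ultimately have False using Pz[OF K(1,3)] K nc'[OF zW[OF K(1,3)]] by blast }
      then show ?thesis by blast
    qed
    have d3: "W1 \<inter> W2 = {}"
    proof -
      { fix z assume z: "z \<in> W1" "z \<in> W2"
        then obtain K1 K2 where "K1 \<in> WW" "P K1" "z \<in> K1" "K2 \<in> WW" "\<not> P K2" "z \<in> K2"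
          unfolding W1_def W2_def by blast
        then have False using Pz by blast }
      then show ?thesis by blast
    qed
    have d4: "Hp \<inter> Hm = {}" unfolding Hp_def Hm_def by auto
    have "(Hp \<union> W1) \<inter> C = {} \<or> (Hm \<union> W2) \<inter> C = {}"
    proof (rule connected_closedD[OF cC])
      show "(Hp \<union> W1) \<inter> (Hm \<union> W2) \<inter> C = {}" using d1 d2 d3 d4 by blast
      show "C \<subseteq> Hp \<union> W1 \<union> (Hm \<union> W2)" using CZ WU unfolding Z_def by blast
    qed (use clHp clHm clW1 clW2 in auto)
    then show False using up down by blast
  qed
  have "path_component (- Z) a b"
    using cc open_path_connected_component[of "- Z"] clZ by (simp add: open_Compl)
  then obtain g where g: "path g" "path_image g \<subseteq> - Z" "pathstart g = a" "pathfinish g = b"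
    unfolding path_component_def by blast
  define S1 where "S1 = {z::real\<times>real. 0 \<le> fst z}"
  define S2 where "S2 = {z::real\<times>real. fst z \<le> 1}"
  have clS1: "closed S1" unfolding S1_def by (intro closed_Collect_le continuous_intros)
  have clS2: "closed S2" unfolding S2_def by (intro closed_Collect_le continuous_intros)
  obtain h1 where h1: "path h1" "pathstart h1 = pathstart (reversepath g)"
      "path_image h1 \<subseteq> path_image (reversepath g) \<inter> S1" "pathfinish h1 \<in> frontier S1"
  proof (rule exists_path_subpath_to_frontier_closed[OF clS1])
    show "path (reversepath g)" using g by simp
    show "pathstart (reversepath g) \<in> S1" using g unfolding S1_def b_def by simp
    show "pathfinish (reversepath g) \<notin> S1" using g unfolding S1_def a_def by simp
  qed blast
  have h1f: "fst (pathfinish h1) = 0" using h1(4) frontier_fst_ge unfolding S1_def by blast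
  obtain h2 where h2: "path h2" "pathstart h2 = pathstart (reversepath h1)"
      "path_image h2 \<subseteq> path_image (reversepath h1) \<inter> S2" "pathfinish h2 \<in> frontier S2"
  proof (rule exists_path_subpath_to_frontier_closed[OF clS2])
    show "path (reversepath h1)" using h1 by simp
    show "pathstart (reversepath h1) \<in> S2" using h1f unfolding S2_def by simp
    show "pathfinish (reversepath h1) \<notin> S2" using g h1 unfolding S2_def b_def by simp
  qed blast
  have h2f: "fst (pathfinish h2) = 1" using h2(4) frontier_fst_le unfolding S2_def by blast
  have h2s: "fst (pathstart h2) = 0" using h2(2) h1f by simp
  have img: "path_image h2 \<subseteq> - Z \<inter> S1 \<inter> S2"
    using h1(3) h2(3) g(2) by (auto simp: path_image_reversepath)
  show ?thesis
  proof (rule that[OF h2(1) _ _ h2s h2f])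
    show "path_image h2 \<inter> \<Union> WW = {}" using img unfolding Z_def W_def by blast
    show "\<forall>z\<in>path_image h2. 0 \<le> fst z \<and> fst z \<le> 1 \<and> 0 < snd z \<and> snd z < 1"
      using img unfolding Z_def S1_def S2_def Hp_def Hm_def by auto
  qed
qed

lemma H1_TB:
  fixes WW :: "(real \<times> real) set set"
  assumes fin: "finite WW" and cl: "\<And>K. K \<in> WW \<Longrightarrow> closed K" and cn: "\<And>K. K \<in> WW \<Longrightarrow> connected K"
    and inQ: "\<And>z. z \<in> \<Union>WW \<Longrightarrow> 0 \<le> snd z \<and> snd z \<le> 1 \<and> 0 \<le> fst z \<and> fst z \<le> 1"
    and nc: "\<And>z. z \<in> \<Union>WW \<Longrightarrow> \<not> ((\<exists>w\<in>connected_component_set (\<Union>WW) z. fst w = 0) \<and>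
                                     (\<exists>w\<in>connected_component_set (\<Union>WW) z. fst w = 1))"
  obtains g where "path g" "path_image g \<inter> \<Union>WW = {}"
    "\<forall>z\<in>path_image g. 0 \<le> snd z \<and> snd z \<le> 1 \<and> 0 < fst z \<and> fst z < 1"
    "snd (pathstart g) = 0" "snd (pathfinish g) = 1"
proof -
  define W where "W = \<Union>WW"
  define Hp where "Hp = {z::real\<times>real. 1 \<le> fst z}"
  define Hm where "Hm = {z::real\<times>real. fst z \<le> 0}"
  define Z where "Z = W \<union> Hp \<union> Hm"
  define a where "a = (1/2::real, -1::real)"
  define b where "b = (1/2::real, 2::real)"
  have clW: "closed W" unfolding W_def using fin cl by (simp add: closed_Union)
  have clHp: "closed Hp" unfolding Hp_def by (intro closed_Collect_le continuous_intros)
  have clHm: "closed Hm" unfolding Hm_def by (intro closed_Collect_le continuous_intros)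
  have clZ: "closed Z" unfolding Z_def using clW clHp clHm by auto
  have inQ': "0 \<le> snd z \<and> snd z \<le> 1 \<and> 0 \<le> fst z \<and> fst z \<le> 1" if "z \<in> W" for z
    using inQ that unfolding W_def by blast
  have nc': "\<not> ((\<exists>w\<in>connected_component_set W z. fst w = 0) \<and> (\<exists>w\<in>connected_component_set W z. fst w = 1))"
    if "z \<in> W" for z using nc that unfolding W_def by blast
  have ccW: "connected_component_set W z = connected_component_set W w"
    if "K \<in> WW" "z \<in> K" "w \<in> K" for K z w
  proof -
    have "connected_component W z w"
      unfolding connected_component_def W_def using that cn by blast
    then show ?thesis using connected_component_eq[of w W z] by (simp add: mem_Collect_eq)
  qed
  have cc: "connected_component (- Z) a b"
  proof (rule ccontr)
    assume "\<not> connected_component (- Z) a b"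
    then obtain C where C: "C \<in> components Z" "\<not> connected_component (- C) a b"
      using separation_by_component_closed_pointwise[OF clZ] by blast
    have CZ: "C \<subseteq> Z" and cC: "connected C"
      using C in_components_subset in_components_connected by auto
    have up: "C \<inter> Hp \<noteq> {}"
    proof
      assume e: "C \<inter> Hp = {}"
      have sub: "cbox (1/2,-1) (2,-1) \<union> cbox (2,-1) (2,2) \<union> cbox (1/2,2) (2,2) \<subseteq> - C"
      proof
        fix z :: "real \<times> real"
        assume z: "z \<in> cbox (1/2,-1) (2,-1) \<union> cbox (2,-1) (2,2) \<union> cbox (1/2,2) (2,2)"
        have "z \<notin> W"
        proof
          assume "z \<in> W"
          from inQ'[OF this] z show False by (cases z) (auto simp: cbox_Pair_iff)
        qed
        moreover have "z \<notin> Hm" using z unfolding Hm_def by (cases z) (auto simp: cbox_Pair_iff)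
        ultimately show "z \<in> - C" using e CZ unfolding Z_def by blast
      qed
      have "connected_component (- C) a b"
      proof (rule cc_path3[of a "(2,-1)" _ "(2,2)"])
        have "closed_segment a (2,- 1) \<subseteq> (cbox (1/2,-1) (2,-1) :: (real \<times> real) set)"
          by (rule seg_box) (auto simp: cbox_Pair_iff a_def b_def)
        then show "closed_segment a (2,- 1) \<subseteq> - C" using sub by blast
        have "closed_segment (2,- 1) (2,2) \<subseteq> (cbox (2,-1) (2,2) :: (real \<times> real) set)"
          by (rule seg_box) (auto simp: cbox_Pair_iff a_def b_def)
        then show "closed_segment (2,- 1) (2,2) \<subseteq> - C" using sub by blast
        have "closed_segment (2,2) b \<subseteq> (cbox (1/2,2) (2,2) :: (real \<times> real) set)"
          by (rule seg_box) (auto simp: cbox_Pair_iff a_def b_def)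
        then show "closed_segment (2,2) b \<subseteq> - C" using sub by blast
      qed
      with C show False by blast
    qed
    have down: "C \<inter> Hm \<noteq> {}"
    proof
      assume e: "C \<inter> Hm = {}"
      have sub: "cbox (-1,-1) (1/2,-1) \<union> cbox (-1,-1) (-1,2) \<union> cbox (-1,2) (1/2,2) \<subseteq> - C"
      proof
        fix z :: "real \<times> real"
        assume z: "z \<in> cbox (-1,-1) (1/2,-1) \<union> cbox (-1,-1) (-1,2) \<union> cbox (-1,2) (1/2,2)"
        have "z \<notin> W"
        proof
          assume "z \<in> W"
          from inQ'[OF this] z show False by (cases z) (auto simp: cbox_Pair_iff)
        qed
        moreover have "z \<notin> Hp" using z unfolding Hp_def by (cases z) (auto simp: cbox_Pair_iff)
        ultimately show "z \<in> - C" using e CZ unfolding Z_def by blast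
      qed
      have "connected_component (- C) a b"
      proof (rule cc_path3[of a "(-1,-1)" _ "(-1,2)"])
        have "closed_segment a (-1,- 1) \<subseteq> (cbox (-1,-1) (1/2,-1) :: (real \<times> real) set)"
          by (rule seg_box) (auto simp: cbox_Pair_iff a_def b_def)
        then show "closed_segment a (-1,- 1) \<subseteq> - C" using sub by blast
        have "closed_segment (-1,- 1) (-1,2) \<subseteq> (cbox (-1,-1) (-1,2) :: (real \<times> real) set)"
          by (rule seg_box) (auto simp: cbox_Pair_iff a_def b_def)
        then show "closed_segment (-1,- 1) (-1,2) \<subseteq> - C" using sub by blast
        have "closed_segment (-1,2) b \<subseteq> (cbox (-1,2) (1/2,2) :: (real \<times> real) set)"
          by (rule seg_box) (auto simp: cbox_Pair_iff a_def b_def)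
        then show "closed_segment (-1,2) b \<subseteq> - C" using sub by blast
      qed
      with C show False by blast
    qed
    define P where "P K \<longleftrightarrow> (\<exists>z\<in>K. \<exists>w\<in>connected_component_set W z. fst w = 1)" for K
    define W1 where "W1 = \<Union>{K\<in>WW. P K}"
    define W2 where "W2 = \<Union>{K\<in>WW. \<not> P K}"
    have clW1: "closed W1" unfolding W1_def using fin cl by (intro closed_Union) auto
    have clW2: "closed W2" unfolding W2_def using fin cl by (intro closed_Union) auto
    have WU: "W = W1 \<union> W2" unfolding W_def W1_def W2_def by blast
    have Pz: "P K \<longleftrightarrow> (\<exists>w\<in>connected_component_set W z. fst w = 1)" if "K \<in> WW" "z \<in> K" for K z
      unfolding P_def
    proof
      assume "\<exists>z'\<in>K. \<exists>w\<in>connected_component_set W z'. fst w = 1"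
      then obtain z' w where zw: "z' \<in> K" "w \<in> connected_component_set W z'" "fst w = 1" by blast
      have "connected_component_set W z = connected_component_set W z'" by (rule ccW[OF that(1) that(2) zw(1)])
      with zw show "\<exists>w\<in>connected_component_set W z. fst w = 1" by blast
    next
      assume "\<exists>w\<in>connected_component_set W z. fst w = 1"
      then show "\<exists>z'\<in>K. \<exists>w\<in>connected_component_set W z'. fst w = 1" using that(2) by blast
    qed
    have zW: "z \<in> W" if "K \<in> WW" "z \<in> K" for K z using that unfolding W_def by blast
    have d1: "Hp \<inter> W2 = {}"
    proof -
      { fix z assume z: "z \<in> Hp" "z \<in> W2"
        then obtain K where K: "K \<in> WW" "\<not> P K" "z \<in> K" unfolding W2_def by blast
        have "fst z = 1" using z inQ'[OF zW[OF K(1,3)]] unfolding Hp_def by auto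
        moreover have "z \<in> connected_component_set W z" using zW[OF K(1,3)] by simp
        ultimately have False using Pz[OF K(1,3)] K by blast }
      then show ?thesis by blast
    qed
    have d2: "Hm \<inter> W1 = {}"
    proof -
      { fix z assume z: "z \<in> Hm" "z \<in> W1"
        then obtain K where K: "K \<in> WW" "P K" "z \<in> K" unfolding W1_def by blast
        have "fst z = 0" using z inQ'[OF zW[OF K(1,3)]] unfolding Hm_def by auto
        moreover have "z \<in> connected_component_set W z" using zW[OF K(1,3)] by simp
        ultimately have False using Pz[OF K(1,3)] K nc'[OF zW[OF K(1,3)]] by blast }
      then show ?thesis by blast
    qed
    have d3: "W1 \<inter> W2 = {}"
    proof -
      { fix z assume z: "z \<in> W1" "z \<in> W2"
        then obtain K1 K2 where "K1 \<in> WW" "P K1" "z \<in> K1" "K2 \<in> WW" "\<not> P K2" "z \<in> K2"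
          unfolding W1_def W2_def by blast
        then have False using Pz by blast }
      then show ?thesis by blast
    qed
    have d4: "Hp \<inter> Hm = {}" unfolding Hp_def Hm_def by auto
    have "(Hp \<union> W1) \<inter> C = {} \<or> (Hm \<union> W2) \<inter> C = {}"
    proof (rule connected_closedD[OF cC])
      show "(Hp \<union> W1) \<inter> (Hm \<union> W2) \<inter> C = {}" using d1 d2 d3 d4 by blast
      show "C \<subseteq> Hp \<union> W1 \<union> (Hm \<union> W2)" using CZ WU unfolding Z_def by blast
    qed (use clHp clHm clW1 clW2 in auto)
    then show False using up down by blast
  qed
  have "path_component (- Z) a b"
    using cc open_path_connected_component[of "- Z"] clZ by (simp add: open_Compl)
  then obtain g where g: "path g" "path_image g \<subseteq> - Z" "pathstart g = a" "pathfinish g = b"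
    unfolding path_component_def by blast
  define S1 where "S1 = {z::real\<times>real. 0 \<le> snd z}"
  define S2 where "S2 = {z::real\<times>real. snd z \<le> 1}"
  have clS1: "closed S1" unfolding S1_def by (intro closed_Collect_le continuous_intros)
  have clS2: "closed S2" unfolding S2_def by (intro closed_Collect_le continuous_intros)
  obtain h1 where h1: "path h1" "pathstart h1 = pathstart (reversepath g)"
      "path_image h1 \<subseteq> path_image (reversepath g) \<inter> S1" "pathfinish h1 \<in> frontier S1"
  proof (rule exists_path_subpath_to_frontier_closed[OF clS1])
    show "path (reversepath g)" using g by simp
    show "pathstart (reversepath g) \<in> S1" using g unfolding S1_def b_def by simp
    show "pathfinish (reversepath g) \<notin> S1" using g unfolding S1_def a_def by simp
  qed blast
  have h1f: "snd (pathfinish h1) = 0" using h1(4) frontier_snd_ge unfolding S1_def by blast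
  obtain h2 where h2: "path h2" "pathstart h2 = pathstart (reversepath h1)"
      "path_image h2 \<subseteq> path_image (reversepath h1) \<inter> S2" "pathfinish h2 \<in> frontier S2"
  proof (rule exists_path_subpath_to_frontier_closed[OF clS2])
    show "path (reversepath h1)" using h1 by simp
    show "pathstart (reversepath h1) \<in> S2" using h1f unfolding S2_def by simp
    show "pathfinish (reversepath h1) \<notin> S2" using g h1 unfolding S2_def b_def by simp
  qed blast
  have h2f: "snd (pathfinish h2) = 1" using h2(4) frontier_snd_le unfolding S2_def by blast
  have h2s: "snd (pathstart h2) = 0" using h2(2) h1f by simp
  have img: "path_image h2 \<subseteq> - Z \<inter> S1 \<inter> S2"
    using h1(3) h2(3) g(2) by (auto simp: path_image_reversepath)
  show ?thesis
  proof (rule that[OF h2(1) _ _ h2s h2f])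
    show "path_image h2 \<inter> \<Union> WW = {}" using img unfolding Z_def W_def by blast
    show "\<forall>z\<in>path_image h2. 0 \<le> snd z \<and> snd z \<le> 1 \<and> 0 < fst z \<and> fst z < 1"
      using img unfolding Z_def S1_def S2_def Hp_def Hm_def by auto
  qed
qed



lemma finite_grid: "finite (grid_cubes k)"
proof -
  have "grid_cubes k \<subseteq> (\<lambda>(i,j). cell k i j) ` ({1..k} \<times> {1..k})"
    unfolding grid_cubes_cell by auto
  then show ?thesis by (rule finite_subset) simp
qed

lemma grid_props:
  assumes "k \<ge> 1" "K \<in> grid_cubes k"
  shows "closed K" "connected K" "\<And>z. z \<in> K \<Longrightarrow> 0 \<le> fst z \<and> fst z \<le> 1 \<and> 0 \<le> snd z \<and> snd z \<le> 1"
  using assms closed_cell connected_cell cell_sub unfolding grid_cubes_cell by blast+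

definition Uset :: "nat \<Rightarrow> ((real \<times> real) set \<Rightarrow> int) \<Rightarrow> int \<Rightarrow> (real \<times> real) set" where
  "Uset k F p = \<Union>{K\<in>grid_cubes k. F K = p}"
definition Aset :: "nat \<Rightarrow> ((real \<times> real) set \<Rightarrow> int) \<Rightarrow> int \<Rightarrow> (real \<times> real) set" where
  "Aset k F p = \<Union>{K\<in>grid_cubes k. F K > p}"
definition Bset :: "nat \<Rightarrow> ((real \<times> real) set \<Rightarrow> int) \<Rightarrow> int \<Rightarrow> (real \<times> real) set" where
  "Bset k F p = \<Union>{K\<in>grid_cubes k. F K < p}"

lemma sepAB:
  assumes "admissible2 1 k F" "k \<ge> 1" "z \<in> Aset k F p" "z \<in> Bset k F p"
  shows "z \<in> Uset k F p"
proof -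
  obtain K1 where "K1 \<in> grid_cubes k" "F K1 > p" "z \<in> K1" using assms(3) unfolding Aset_def by blast
  moreover obtain K2 where "K2 \<in> grid_cubes k" "F K2 < p" "z \<in> K2" using assms(4) unfolding Bset_def by blast
  ultimately obtain K3 where "K3 \<in> grid_cubes k" "F K3 = p" "z \<in> K3" using grid_sep[OF assms(1,2)] by metis
  then show ?thesis unfolding Uset_def by blast
qed

lemma side:
  fixes g :: "real \<Rightarrow> real \<times> real"
  assumes adm: "admissible2 1 k F" and k: "k \<ge> 1" and g: "path g"
    and gQ: "\<forall>z\<in>path_image g. 0 \<le> fst z \<and> fst z \<le> 1 \<and> 0 \<le> snd z \<and> snd z \<le> 1"
    and gU: "path_image g \<inter> Uset k F p = {}"
  shows "path_image g \<subseteq> Aset k F p \<or> path_image g \<subseteq> Bset k F p"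
proof -
  have clA: "closed (Aset k F p)" unfolding Aset_def
    using finite_grid grid_props[OF k] by (intro closed_Union) auto
  have clB: "closed (Bset k F p)" unfolding Bset_def
    using finite_grid grid_props[OF k] by (intro closed_Union) auto
  have cov: "path_image g \<subseteq> Aset k F p \<union> Bset k F p"
  proof
    fix z assume z: "z \<in> path_image g"
    then obtain i j where ij: "i \<in> {1..k}" "j \<in> {1..k}" "z \<in> cell k i j"
      using cell_cover[OF k] gQ by blast
    have K: "cell k i j \<in> grid_cubes k" using ij cell_in_grid by blast
    have "F (cell k i j) \<noteq> p" using K ij z gU unfolding Uset_def by blast
    then show "z \<in> Aset k F p \<union> Bset k F p"
      using K ij unfolding Aset_def Bset_def by (cases "F (cell k i j) > p") auto
  qed
  have dis: "Aset k F p \<inter> Bset k F p \<inter> path_image g = {}"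
    using sepAB[OF adm k] gU by blast
  have "Aset k F p \<inter> path_image g = {} \<or> Bset k F p \<inter> path_image g = {}"
    using connected_closedD[OF connected_path_image[OF g] dis cov clA clB] .
  then show ?thesis using cov by blast
qed

definition crossing :: "(real \<times> real) set \<Rightarrow> bool" where
  "crossing U \<longleftrightarrow> (\<exists>z\<in>U.
     ((\<exists>w\<in>connected_component_set U z. fst w = 0) \<and> (\<exists>w\<in>connected_component_set U z. fst w = 1)) \<or>
     ((\<exists>w\<in>connected_component_set U z. snd w = 0) \<and> (\<exists>w\<in>connected_component_set U z. snd w = 1)))"

lemma int_step:
  fixes P :: "int \<Rightarrow> bool"
  assumes "P m" "\<not> P M" "m \<le> M"
  shows "\<exists>p. P p \<and> \<not> P (p + 1)"
proof (rule ccontr)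
  assume "\<not> ?thesis"
  then have step: "P p \<Longrightarrow> P (p + 1)" for p by blast
  have all: "P (m + int n)" for n
  proof (induction n)
    case 0 then show ?case using assms(1) by simp
  next
    case (Suc n)
    have "m + int (Suc n) = (m + int n) + 1" by simp
    then show ?case using step[OF Suc.IH] by metis
  qed
  have "M = m + int (nat (M - m))" using assms(3) by simp
  then show False using all assms(2) by metis
qed

lemma main_crossing:
  assumes adm: "admissible2 1 k F" and k: "k \<ge> 1"
  shows "\<exists>p. crossing (Uset k F p)"
proof (rule ccontr)
  assume nc: "\<not> (\<exists>p. crossing (Uset k F p))"
  have fin: "finite {K\<in>grid_cubes k. F K = p}" for p using finite_grid by simp
  have props: "\<And>K. K \<in> {K\<in>grid_cubes k. F K = p} \<Longrightarrow> closed K"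
              "\<And>K. K \<in> {K\<in>grid_cubes k. F K = p} \<Longrightarrow> connected K"
              "\<And>z. z \<in> \<Union>{K\<in>grid_cubes k. F K = p} \<Longrightarrow> 0 \<le> fst z \<and> fst z \<le> 1 \<and> 0 \<le> snd z \<and> snd z \<le> 1"
    for p using grid_props[OF k] by blast+
  have ncp: "\<not> crossing (\<Union>{K\<in>grid_cubes k. F K = p})" for p using nc unfolding Uset_def by blast
  have "\<exists>L. path L \<and> path_image L \<inter> Uset k F p = {} \<and>
          (\<forall>z\<in>path_image L. 0 \<le> fst z \<and> fst z \<le> 1 \<and> 0 \<le> snd z \<and> snd z \<le> 1) \<and>
          fst (pathstart L) = 0 \<and> fst (pathfinish L) = 1" for p
  proof -
    obtain g where g: "path g" "path_image g \<inter> \<Union>{K\<in>grid_cubes k. F K = p} = {}"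
      "\<forall>z\<in>path_image g. 0 \<le> fst z \<and> fst z \<le> 1 \<and> 0 < snd z \<and> snd z < 1"
      "fst (pathstart g) = 0" "fst (pathfinish g) = 1"
    proof (rule H1_LR[OF fin props])
      show "\<And>z. z \<in> \<Union>{K\<in>grid_cubes k. F K = p} \<Longrightarrow>
        \<not> ((\<exists>w\<in>connected_component_set (\<Union>{K\<in>grid_cubes k. F K = p}) z. snd w = 0) \<and>
           (\<exists>w\<in>connected_component_set (\<Union>{K\<in>grid_cubes k. F K = p}) z. snd w = 1))"
        using ncp[of p] unfolding crossing_def by blast
    qed blast
    then show ?thesis unfolding Uset_def by (intro exI[of _ g]) auto
  qed
  then obtain Lf where Lf: "\<And>p. path (Lf p)" "\<And>p. path_image (Lf p) \<inter> Uset k F p = {}"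
     "\<And>p. \<forall>z\<in>path_image (Lf p). 0 \<le> fst z \<and> fst z \<le> 1 \<and> 0 \<le> snd z \<and> snd z \<le> 1"
     "\<And>p. fst (pathstart (Lf p)) = 0" "\<And>p. fst (pathfinish (Lf p)) = 1"
    by metis
  have "\<exists>L. path L \<and> path_image L \<inter> Uset k F p = {} \<and>
          (\<forall>z\<in>path_image L. 0 \<le> fst z \<and> fst z \<le> 1 \<and> 0 \<le> snd z \<and> snd z \<le> 1) \<and>
          snd (pathstart L) = 0 \<and> snd (pathfinish L) = 1" for p
  proof -
    obtain g where g: "path g" "path_image g \<inter> \<Union>{K\<in>grid_cubes k. F K = p} = {}"
      "\<forall>z\<in>path_image g. 0 \<le> snd z \<and> snd z \<le> 1 \<and> 0 < fst z \<and> fst z < 1"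
      "snd (pathstart g) = 0" "snd (pathfinish g) = 1"
    proof (rule H1_TB[OF fin props(1,2)])
      show "\<And>z. z \<in> \<Union>{K\<in>grid_cubes k. F K = p} \<Longrightarrow> 0 \<le> snd z \<and> snd z \<le> 1 \<and> 0 \<le> fst z \<and> fst z \<le> 1"
        using props(3) by blast
      show "\<And>z. z \<in> \<Union>{K\<in>grid_cubes k. F K = p} \<Longrightarrow>
        \<not> ((\<exists>w\<in>connected_component_set (\<Union>{K\<in>grid_cubes k. F K = p}) z. fst w = 0) \<and>
           (\<exists>w\<in>connected_component_set (\<Union>{K\<in>grid_cubes k. F K = p}) z. fst w = 1))"
        using ncp[of p] unfolding crossing_def by blast
    qed blast
    then show ?thesis unfolding Uset_def by (intro exI[of _ g]) auto
  qed
  then obtain Tf where Tf: "\<And>p. path (Tf p)" "\<And>p. path_image (Tf p) \<inter> Uset k F p = {}"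
     "\<And>p. \<forall>z\<in>path_image (Tf p). 0 \<le> fst z \<and> fst z \<le> 1 \<and> 0 \<le> snd z \<and> snd z \<le> 1"
     "\<And>p. snd (pathstart (Tf p)) = 0" "\<And>p. snd (pathfinish (Tf p)) = 1"
    by metis
  have sideL: "path_image (Lf p) \<subseteq> Aset k F p \<or> path_image (Lf p) \<subseteq> Bset k F p" for p
    using side[OF adm k Lf(1) Lf(3) Lf(2)] .
  have sideT: "path_image (Tf p) \<subseteq> Aset k F p \<or> path_image (Tf p) \<subseteq> Bset k F p" for p
    using side[OF adm k Tf(1) Tf(3) Tf(2)] .
  have meet: "\<exists>z. z \<in> path_image (Lf p) \<and> z \<in> path_image (Tf q)" for p q
    using fashoda_pair[OF Lf(1) Tf(1) Lf(3) Tf(3) Lf(4) Lf(5) Tf(4) Tf(5)] .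
  have same: "path_image (Tf p) \<subseteq> Aset k F p" if "path_image (Lf p) \<subseteq> Aset k F p" for p
  proof (rule ccontr)
    assume "\<not> ?thesis"
    then have TB: "path_image (Tf p) \<subseteq> Bset k F p" using sideT by blast
    obtain z where z: "z \<in> path_image (Lf p)" "z \<in> path_image (Tf p)" using meet by blast
    then have "z \<in> Uset k F p" using sepAB[OF adm k] that TB by blast
    then show False using z Lf(2) by blast
  qed
  define G where "G = grid_cubes k"
  have G1: "cell k 1 1 \<in> G" unfolding G_def using k cell_in_grid by auto
  define m where "m = Min (F ` G)"
  define M where "M = Max (F ` G)"
  have finG: "finite (F ` G)" unfolding G_def using finite_grid by simp
  have Bm: "Bset k F m = {}"
    unfolding Bset_def m_def using finG Min_le G_def by fastforce
  have AM: "Aset k F M = {}"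
    unfolding Aset_def M_def using finG Max_ge G_def by fastforce
  have mM: "m \<le> M" unfolding m_def M_def using finG G1 by (meson Max_ge Min_le image_eqI order_trans)
  have ne: "path_image (Lf p) \<noteq> {}" for p by (simp add: path_image_nonempty)
  have Pm: "path_image (Lf m) \<subseteq> Aset k F m" using sideL[of m] Bm ne by blast
  have PM: "\<not> path_image (Lf M) \<subseteq> Aset k F M" using AM ne by blast
  obtain p where p1: "path_image (Lf p) \<subseteq> Aset k F p" and p2: "\<not> path_image (Lf (p+1)) \<subseteq> Aset k F (p+1)"
    using int_step[of "\<lambda>p. path_image (Lf p) \<subseteq> Aset k F p", OF Pm PM mM] by blast
  have T: "path_image (Tf p) \<subseteq> Aset k F p" using same p1 by blast
  have L: "path_image (Lf (p+1)) \<subseteq> Bset k F (p+1)" using sideL p2 by blast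
  obtain z where z: "z \<in> path_image (Lf (p+1))" "z \<in> path_image (Tf p)" using meet by blast
  have zU: "z \<notin> Uset k F p" using z Tf(2) by blast
  have "z \<in> Bset k F p"
  proof -
    obtain K where K: "K \<in> grid_cubes k" "F K < p + 1" "z \<in> K" using z L unfolding Bset_def by blast
    have "F K \<noteq> p" using K zU unfolding Uset_def by blast
    then show ?thesis using K unfolding Bset_def by auto
  qed
  then have "z \<in> Uset k F p" using sepAB[OF adm k] T z by blast
  then show False using zU by blast
qed



lemma good1: "good_const2 1 1"
  unfolding good_const2_def
proof (intro allI impI)
  fix k :: nat and F assume k: "k \<ge> 1" and adm: "admissible2 1 k F"
  obtain p where "crossing (Uset k F p)" using main_crossing[OF adm k] by blast
  then obtain z where z: "z \<in> Uset k F p" and cr: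
     "((\<exists>w\<in>connected_component_set (Uset k F p) z. fst w = 0) \<and> (\<exists>w\<in>connected_component_set (Uset k F p) z. fst w = 1)) \<or>
     ((\<exists>w\<in>connected_component_set (Uset k F p) z. snd w = 0) \<and> (\<exists>w\<in>connected_component_set (Uset k F p) z. snd w = 1))"
    unfolding crossing_def by blast
  define C where "C = connected_component_set (Uset k F p) z"
  define S where "S = {K\<in>grid_cubes k. F K = p \<and> K \<subseteq> C}"
  have SC: "\<Union>S = C"
  proof
    show "\<Union>S \<subseteq> C" unfolding S_def by blast
    show "C \<subseteq> \<Union>S"
    proof
      fix w assume w: "w \<in> C"
      then have "w \<in> Uset k F p" unfolding C_def using connected_component_subset by blast
      then obtain K where K: "K \<in> grid_cubes k" "F K = p" "w \<in> K" unfolding Uset_def by blast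
      have KU: "K \<subseteq> Uset k F p" using K unfolding Uset_def by blast
      have "K \<subseteq> connected_component_set (Uset k F p) w"
        by (rule connected_component_maximal[OF K(3) grid_props(2)[OF k K(1)] KU])
      moreover have "connected_component_set (Uset k F p) w = C"
        using w unfolding C_def by (simp add: connected_component_eq)
      ultimately show "w \<in> \<Union>S" using K unfolding S_def by blast
    qed
  qed
  have "connects_opposite_faces (\<Union>S)"
    unfolding connects_opposite_faces_def SC using cr unfolding C_def
    by (simp add: connected_connected_component)
  moreover have "one_connected {p}"
    unfolding one_connected_def by (auto intro!: exI[of _ "[p]"])
  moreover have "S \<subseteq> grid_cubes k" "\<forall>K\<in>S. F K \<in> {p}" unfolding S_def by auto
  ultimately show "\<exists>P. finite P \<and> one_connected P \<and> real (card P) \<le> 1 \<and>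
     (\<exists>\<S>. \<S> \<subseteq> grid_cubes k \<and> (\<forall>K\<in>\<S>. F K \<in> P) \<and> connects_opposite_faces (\<Union> \<S>))"
    by (intro exI[of _ "{p}"] conjI exI[of _ S]) auto
qed

lemma good0: "good_const2 0 1"
proof -
  have "admissible2 1 k F" if "admissible2 0 k F" for k F
    unfolding admissible2_def
  proof (intro ballI impI)
    fix K1 K2 assume K: "K1 \<in> grid_cubes k" "K2 \<in> grid_cubes k" and a: "int 1 \<le> aff_dim (K1 \<inter> K2)"
    from a have "int 0 \<le> aff_dim (K1 \<inter> K2)" by simp
    then show "\<bar>F K1 - F K2\<bar> \<le> 1" using that K unfolding admissible2_def by blast
  qed
  note adm = this
  show ?thesis unfolding good_const2_def
  proof (intro allI impI)
    fix k :: nat and F assume k: "k \<ge> 1" and a0: "admissible2 0 k F"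
    show "\<exists>P. finite P \<and> one_connected P \<and> real (card P) \<le> 1 \<and>
        (\<exists>\<S>\<subseteq>grid_cubes k. (\<forall>K\<in>\<S>. F K \<in> P) \<and> connects_opposite_faces (\<Union> \<S>))"
      using good1[unfolded good_const2_def, rule_format, OF k adm[OF a0]] .
  qed
qed

lemma good_mono: assumes g: "good_const2 m 1" and C: "1 \<le> C" shows "good_const2 m C"
  unfolding good_const2_def
proof (intro allI impI)
  fix k :: nat and F assume k: "k \<ge> 1" and a: "admissible2 m k F"
  obtain P where P: "finite P" "one_connected P" "real (card P) \<le> 1"
      "\<exists>\<S>\<subseteq>grid_cubes k. (\<forall>K\<in>\<S>. F K \<in> P) \<and> connects_opposite_faces (\<Union> \<S>)"
    using g[unfolded good_const2_def, rule_format, OF k a] by blast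
  have "real (card P) \<le> C" using P(3) C by linarith
  then show "\<exists>P. finite P \<and> one_connected P \<and> real (card P) \<le> C \<and>
        (\<exists>\<S>\<subseteq>grid_cubes k. (\<forall>K\<in>\<S>. F K \<in> P) \<and> connects_opposite_faces (\<Union> \<S>))"
    using P by blast
qed

lemma not_good: assumes "C < 1" shows "\<not> good_const2 m C"
proof
  assume g: "good_const2 m C"
  have "admissible2 m 1 (\<lambda>_. 0)" unfolding admissible2_def by simp
  then obtain P S where P: "finite P" "real (card P) \<le> C" and S: "\<forall>K\<in>S. (0::int) \<in> P"
      "connects_opposite_faces (\<Union>S)"
    using g[unfolded good_const2_def, rule_format, of 1 "\<lambda>_. 0"] by auto
  have "card P = 0" using P assms by linarith
  then have "P = {}" using P by simp
  then have "S = {}" using S by blast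
  then show False using S unfolding connects_opposite_faces_def by simp
qed

lemma C_hat_eq: assumes "good_const2 m 1" shows "C_hat2 m = 1"
proof -
  have "{C. C > 0 \<and> good_const2 m C} = {1..}"
  proof (rule set_eqI)
    fix C :: real
    show "C \<in> {C. C > 0 \<and> good_const2 m C} \<longleftrightarrow> C \<in> {1..}"
    proof
      assume "C \<in> {C. C > 0 \<and> good_const2 m C}"
      then have "good_const2 m C" by simp
      then have "\<not> C < 1" using not_good by blast
      then show "C \<in> {1..}" by simp
    next
      assume "C \<in> {1..}"
      then show "C \<in> {C. C > 0 \<and> good_const2 m C}" using good_mono[OF assms, of C] by simp
    qed
  qed
  then show ?thesis unfolding C_hat2_def by (simp add: cInf_atLeast)
qed

theorem proposition5p1:
  shows "C_hat2 0 = 1 \<and> C_hat2 1 = 1"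
  using C_hat_eq good0 good1 by blast

end
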